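(* Let $C$ and $C'$ be Clifford systems on $\mathbb{R}^{2l}$ and $\mathbb{R}^{2l'}$ respectively, each satisfying ($l>m+1$ or $l=m\ge2$) for its own rank. If $C$ and $C'$ are not geometrically equivalent, then there is no isometry $\mathbb{S}^{2l-1}\to\mathbb{S}^{2l'-1}$ mapping the leaves of $\mathcal{F}_C$ onto the leaves of $\mathcal{F}_{C'}$.
   Context: A Clifford system $C$ of rank $m+1$ ($m\ge1$) on $\mathbb{R}^{2l}$, with the standard inner product, is an $(m+1)$-dimensional linear subspace $\mathbb{R}_C$ of the symmetric endomorphisms of $\mathbb{R}^{2l}$. It must admit a basis $P_0,\dots,P_m$ with $P_i^2=\mathrm{Id}$ and $P_iP_j=-P_jP_i$ for $i\ne j$. The map $\pi_C$ is $\pi_C(x)=\sum_i\langle P_ix,x\rangle P_i$ on $\mathbb{S}^{2l-1}$, and $\mathcal{F}_C$ is the partition of $\mathbb{S}^{2l-1}$ into fibers of $\pi_C$. Clifford systems $C,C'$ on the same $\mathbb{R}^{2l}$ are geometrically equivalent if $\mathbb{R}_{C'}=A^{-1}\mathbb{R}_CA$ for some $A\in O(2l)$; systems on spaces of different dimensions are never geometrically equivalent. *)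

theory Defs
  imports "Jordan_Normal_Form.Matrix"
begin

text \<open>Real Euclidean space R^n is modelled by carrier_vec n, endomorphisms by n x n
  real matrices (carrier_mat n n), the standard inner product by the scalar product.\<close>

definition orth_mat :: "nat \<Rightarrow> real mat \<Rightarrow> bool" where
  "orth_mat n A \<longleftrightarrow> A \<in> carrier_mat n n \<and> transpose_mat A * A = 1\<^sub>m n"

definition sym_mat :: "nat \<Rightarrow> real mat \<Rightarrow> bool" where
  "sym_mat n P \<longleftrightarrow> P \<in> carrier_mat n n \<and> transpose_mat P = P"

definition lin_comb :: "nat \<Rightarrow> real mat list \<Rightarrow> (nat \<Rightarrow> real) \<Rightarrow> real mat" where
  "lin_comb n Ps c = mat n n (\<lambda>(i,j). \<Sum>k<length Ps. c k * (Ps ! k) $$ (i,j))"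

definition mat_span :: "nat \<Rightarrow> real mat list \<Rightarrow> real mat set" where
  "mat_span n Ps = range (lin_comb n Ps)"

text \<open>A Clifford system of rank m+1 = length Ps on R^(2l), given by its basis
  P_0,...,P_m of symmetric matrices with P_i^2 = Id and P_i P_j = - P_j P_i (i \<noteq> j);
  m \<ge> 1. The underlying subspace R_C is mat_span (2*l) Ps.\<close>
definition clifford_system :: "nat \<Rightarrow> real mat list \<Rightarrow> bool" where
  "clifford_system l Ps \<longleftrightarrow>
     length Ps \<ge> 2 \<and>
     (\<forall>i < length Ps. sym_mat (2*l) (Ps ! i) \<and> Ps ! i * Ps ! i = 1\<^sub>m (2*l)) \<and>
     (\<forall>i < length Ps. \<forall>j < length Ps. i \<noteq> j \<longrightarrow> Ps ! i * Ps ! j = - (Ps ! j * Ps ! i))"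

definition cs_m :: "real mat list \<Rightarrow> nat" where
  "cs_m Ps = length Ps - 1"

definition unit_sphere :: "nat \<Rightarrow> real vec set" where
  "unit_sphere n = {x \<in> carrier_vec n. x \<bullet> x = 1}"

definition vdist :: "real vec \<Rightarrow> real vec \<Rightarrow> real" where
  "vdist x y = sqrt ((x - y) \<bullet> (x - y))"

definition pi_C :: "nat \<Rightarrow> real mat list \<Rightarrow> real vec \<Rightarrow> real mat" where
  "pi_C l Ps x = lin_comb (2*l) Ps (\<lambda>i. ((Ps ! i) *\<^sub>v x) \<bullet> x)"

definition leaves :: "nat \<Rightarrow> real mat list \<Rightarrow> real vec set set" where
  "leaves l Ps = {{y \<in> unit_sphere (2*l). pi_C l Ps y = pi_C l Ps x} | x. x \<in> unit_sphere (2*l)}"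

text \<open>Geometric equivalence: same ambient space and R_C' = A^{-1} R_C A for some
  A in O(2l) (A^{-1} = A^T for orthogonal A).\<close>
definition geom_equiv :: "nat \<Rightarrow> real mat list \<Rightarrow> nat \<Rightarrow> real mat list \<Rightarrow> bool" where
  "geom_equiv l Ps l' Qs \<longleftrightarrow> l = l' \<and>
     (\<exists>A. orth_mat (2*l) A \<and>
          mat_span (2*l) Qs = (\<lambda>P. transpose_mat A * P * A) ` mat_span (2*l) Ps)"

text \<open>Isometry between unit spheres (w.r.t. the Euclidean/chordal distance, which
  determines the round metric).\<close>
definition sphere_isometry :: "nat \<Rightarrow> nat \<Rightarrow> (real vec \<Rightarrow> real vec) \<Rightarrow> bool" where
  "sphere_isometry n n' f \<longleftrightarrow> bij_betw f (unit_sphere n) (unit_sphere n') \<and>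
     (\<forall>x \<in> unit_sphere n. \<forall>y \<in> unit_sphere n. vdist (f x) (f y) = vdist x y)"

end

theory Submission imports Defs "Jordan_Normal_Form.Determinant" begin

lemma sp_self_ge0: "(v::real vec) \<bullet> v \<ge> 0"
  unfolding scalar_prod_def by (intro sum_nonneg) auto

lemma sp_self_eq0: assumes "(v::real vec) \<in> carrier_vec n" "v \<bullet> v = 0" shows "v = 0\<^sub>v n"
proof -
  have "(\<Sum>i\<in>{0..<dim_vec v}. v $ i * v $ i) = 0"
    using assms(2) unfolding scalar_prod_def by simp
  hence "\<forall>i\<in>{0..<dim_vec v}. v $ i * v $ i = 0"
    by (subst (asm) sum_nonneg_eq_0_iff) auto
  thus ?thesis using assms(1) by (intro eq_vecI) auto
qed

lemma vec_eq_by_dot: assumes v: "(v::real vec) \<in> carrier_vec n" and w: "w \<in> carrier_vec n"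
  and h: "\<And>z. z \<in> carrier_vec n \<Longrightarrow> v \<bullet> z = w \<bullet> z" shows "v = w"
proof -
  have d: "v - w \<in> carrier_vec n" using v w by simp
  have "(v - w) \<bullet> (v - w) = v \<bullet> (v - w) - w \<bullet> (v - w)"
    by (rule minus_scalar_prod_distrib[OF v w d])
  also have "\<dots> = 0" using h[OF d] by simp
  finally have "v - w = 0\<^sub>v n" using sp_self_eq0[OF d] by simp
  show ?thesis
  proof (rule eq_vecI)
    fix i assume "i < dim_vec w"
    hence "(v - w) $ i = 0" using \<open>v - w = 0\<^sub>v n\<close> w by simp
    thus "v $ i = w $ i" using \<open>i < dim_vec w\<close> v w by simp
  qed (use v w in simp)
qed

lemma mat_eq_by_vec: assumes A: "(A::real mat) \<in> carrier_mat n n" and B: "B \<in> carrier_mat n n"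
  and h: "\<And>x. x \<in> carrier_vec n \<Longrightarrow> A *\<^sub>v x = B *\<^sub>v x" shows "A = B"
proof (rule eq_matI)
  fix i j assume ij: "i < dim_row B" "j < dim_col B"
  have "A *\<^sub>v unit_vec n j = B *\<^sub>v unit_vec n j" using h by simp
  hence "(A *\<^sub>v unit_vec n j) $ i = (B *\<^sub>v unit_vec n j) $ i" by simp
  thus "A $$ (i, j) = B $$ (i, j)" using A B ij by simp
qed (use A B in auto)


lemma minus_zero_eq: assumes v: "(v::real vec) \<in> carrier_vec n" and w: "w \<in> carrier_vec n"
  and "v - w = 0\<^sub>v n" shows "v = w"
proof (rule eq_vecI)
  fix i assume "i < dim_vec w"
  hence "(v - w) $ i = 0" using assms by simp
  thus "v $ i = w $ i" using \<open>i < dim_vec w\<close> v w by simp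
qed (use v w in simp)

lemma dot_minus_self: assumes x: "(x::real vec) \<in> carrier_vec n" and y: "y \<in> carrier_vec n"
  shows "(x - y) \<bullet> (x - y) = x \<bullet> x - 2 * (x \<bullet> y) + y \<bullet> y"
proof -
  have "(x - y) \<bullet> (x - y) = x \<bullet> (x - y) - y \<bullet> (x - y)"
    using x y by (simp add: minus_scalar_prod_distrib)
  also have "\<dots> = (x \<bullet> x - x \<bullet> y) - (y \<bullet> x - y \<bullet> y)"
    using x y by (simp add: scalar_prod_minus_distrib)
  finally show ?thesis using comm_scalar_prod[OF x y] by simp
qed

lemma dot_add_self: assumes x: "(x::real vec) \<in> carrier_vec n" and y: "y \<in> carrier_vec n"
  shows "(x + y) \<bullet> (x + y) = x \<bullet> x + 2 * (x \<bullet> y) + y \<bullet> y"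
proof -
  have "(x + y) \<bullet> (x + y) = x \<bullet> (x + y) + y \<bullet> (x + y)"
    using x y by (simp add: add_scalar_prod_distrib)
  also have "\<dots> = (x \<bullet> x + x \<bullet> y) + (y \<bullet> x + y \<bullet> y)"
    using x y by (simp add: scalar_prod_add_distrib)
  finally show ?thesis using comm_scalar_prod[OF x y] by simp
qed

definition nrm :: "real vec \<Rightarrow> real vec" where
  "nrm u = (1 / sqrt (u \<bullet> u)) \<cdot>\<^sub>v u"

lemma nrm_sphere: assumes u: "u \<in> carrier_vec n" and nz: "u \<noteq> 0\<^sub>v n"
  shows "nrm u \<in> unit_sphere n"
proof -
  have "u \<bullet> u \<noteq> 0" using sp_self_eq0[OF u] nz by auto
  hence pos: "u \<bullet> u > 0" using sp_self_ge0[of u] by linarith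
  have "nrm u \<bullet> nrm u = (1 / sqrt (u \<bullet> u)) * ((1 / sqrt (u \<bullet> u)) * (u \<bullet> u))"
    unfolding nrm_def using u by simp
  also have "\<dots> = 1" using pos by (simp add: field_simps)
  finally show ?thesis unfolding unit_sphere_def nrm_def using u by simp
qed

lemma nrm_fix: assumes A: "(A::real mat) \<in> carrier_mat n n" and u: "u \<in> carrier_vec n"
  and "A *\<^sub>v u = u" shows "A *\<^sub>v nrm u = nrm u"
  unfolding nrm_def using mult_mat_vec[OF A u] assms(3) by simp

definition great :: "nat \<Rightarrow> real vec set \<Rightarrow> bool" where
  "great n S \<longleftrightarrow> (\<forall>x\<in>S. \<forall>y\<in>S. x + y \<noteq> 0\<^sub>v n \<longrightarrow> nrm (x + y) \<in> S)"

locale cs =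
  fixes l :: nat and Ps :: "real mat list"
  assumes cs: "clifford_system l Ps" and lpos: "l \<ge> 1"
begin

abbreviation "N \<equiv> 2 * l"
abbreviation "k \<equiv> length Ps"
abbreviation "P i \<equiv> Ps ! i"
abbreviation "L c \<equiv> lin_comb (2*l) Ps c"
definition q :: "nat \<Rightarrow> real vec \<Rightarrow> real" where "q i x = (P i *\<^sub>v x) \<bullet> x"
definition nsq :: "(nat \<Rightarrow> real) \<Rightarrow> real" where "nsq c = (\<Sum>i<k. c i * c i)"

lemma k2: "k \<ge> 2" using cs unfolding clifford_system_def by auto

lemma P_carrier: "i < k \<Longrightarrow> P i \<in> carrier_mat N N"
  using cs unfolding clifford_system_def sym_mat_def by auto

lemma P_dim[simp]: "i < k \<Longrightarrow> dim_row (P i) = N" "i < k \<Longrightarrow> dim_col (P i) = N"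
  using P_carrier by auto

lemma P_T: "i < k \<Longrightarrow> transpose_mat (P i) = P i"
  using cs unfolding clifford_system_def sym_mat_def by auto

lemma P_sq: "i < k \<Longrightarrow> P i * P i = 1\<^sub>m N"
  using cs unfolding clifford_system_def by auto

lemma P_ac: "i < k \<Longrightarrow> j < k \<Longrightarrow> i \<noteq> j \<Longrightarrow> P i * P j = - (P j * P i)"
  using cs unfolding clifford_system_def by blast

lemma Pv_carrier[simp]: "i < k \<Longrightarrow> x \<in> carrier_vec N \<Longrightarrow> P i *\<^sub>v x \<in> carrier_vec N"
  by (rule mult_mat_vec_carrier[OF P_carrier])

lemma P_sym: assumes "i < k" "x \<in> carrier_vec N" "y \<in> carrier_vec N"
  shows "(P i *\<^sub>v x) \<bullet> y = x \<bullet> (P i *\<^sub>v y)"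
  using transpose_vec_mult_scalar[OF P_carrier[OF assms(1)] assms(3) assms(2)] P_T[OF assms(1)] by simp

lemma P_sym2: assumes "i < k" "x \<in> carrier_vec N" "y \<in> carrier_vec N"
  shows "(P i *\<^sub>v x) \<bullet> y = (P i *\<^sub>v y) \<bullet> x"
  using P_sym[OF assms] comm_scalar_prod[OF assms(2) Pv_carrier[OF assms(1,3)]] by simp

lemma P_inv[simp]: assumes "i < k" "x \<in> carrier_vec N" shows "P i *\<^sub>v (P i *\<^sub>v x) = x"
proof -
  have "P i *\<^sub>v (P i *\<^sub>v x) = (P i * P i) *\<^sub>v x"
    using assms P_carrier[OF assms(1)] by simp
  thus ?thesis using P_sq[OF assms(1)] assms by simp
qed

lemma P_anti: assumes "i < k" "j < k" "i \<noteq> j" "x \<in> carrier_vec N"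
  shows "P i *\<^sub>v (P j *\<^sub>v x) = - (P j *\<^sub>v (P i *\<^sub>v x))"
proof -
  have "P i *\<^sub>v (P j *\<^sub>v x) = (P i * P j) *\<^sub>v x"
    using assms P_carrier[OF assms(1)] P_carrier[OF assms(2)] by simp
  also have "\<dots> = (- (P j * P i)) *\<^sub>v x" using P_ac[OF assms(1-3)] by simp
  also have "\<dots> = - ((P j * P i) *\<^sub>v x)"
    using assms P_carrier[OF assms(1)] P_carrier[OF assms(2)] by (subst uminus_mult_mat_vec) auto
  also have "(P j * P i) *\<^sub>v x = P j *\<^sub>v (P i *\<^sub>v x)"
    using assms P_carrier[OF assms(1)] P_carrier[OF assms(2)] by simp
  finally show ?thesis .
qed

lemma P_anti_dot: assumes "i < k" "j < k" "i \<noteq> j" "x \<in> carrier_vec N" "y \<in> carrier_vec N"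
  shows "(P i *\<^sub>v (P j *\<^sub>v x)) \<bullet> y = - ((P j *\<^sub>v (P i *\<^sub>v x)) \<bullet> y)"
proof -
  have "P j *\<^sub>v (P i *\<^sub>v x) \<in> carrier_vec N" using assms by simp
  thus ?thesis using P_anti[OF assms(1-4)] assms by (subst scalar_prod_uminus_left[symmetric]) auto
qed

lemma L_carrier[simp]: "L c \<in> carrier_mat N N"
  unfolding lin_comb_def by simp

lemma Lv_carrier[simp]: "x \<in> carrier_vec N \<Longrightarrow> L c *\<^sub>v x \<in> carrier_vec N"
  by (rule mult_mat_vec_carrier[OF L_carrier])

lemma L_dot: assumes x: "x \<in> carrier_vec N" and y: "y \<in> carrier_vec N"
  shows "(L c *\<^sub>v x) \<bullet> y = (\<Sum>i<k. c i * ((P i *\<^sub>v x) \<bullet> y))"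
proof -
  have Pd: "\<And>i. i < k \<Longrightarrow> dim_row (P i) = N \<and> dim_col (P i) = N" using P_carrier by auto
  have "(L c *\<^sub>v x) \<bullet> y = (\<Sum>r<N. (\<Sum>t<N. (\<Sum>i<k. c i * P i $$ (r,t)) * x $ t) * y $ r)"
    using x y unfolding scalar_prod_def mult_mat_vec_def lin_comb_def row_def
    by (auto simp: atLeast0LessThan intro!: sum.cong)
  also have "\<dots> = (\<Sum>r<N. (\<Sum>t<N. (\<Sum>i<k. c i * P i $$ (r,t) * x $ t * y $ r)))"
    by (simp add: sum_distrib_right)
  also have "\<dots> = (\<Sum>i<k. (\<Sum>r<N. (\<Sum>t<N. c i * P i $$ (r,t) * x $ t * y $ r)))"
    by (simp add: sum.swap[of _ "{..<k}"])
  also have "\<dots> = (\<Sum>i<k. c i * ((P i *\<^sub>v x) \<bullet> y))"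
    using x y Pd unfolding scalar_prod_def mult_mat_vec_def row_def
    by (auto simp: atLeast0LessThan sum_distrib_left sum_distrib_right mult.assoc intro!: sum.cong)
  finally show ?thesis .
qed


lemma L_sym: assumes x: "x \<in> carrier_vec N" and y: "y \<in> carrier_vec N"
  shows "(L c *\<^sub>v x) \<bullet> y = (L c *\<^sub>v y) \<bullet> x"
  unfolding L_dot[OF x y] L_dot[OF y x] using P_sym2 x y by (intro sum.cong) auto

lemma L_sym': assumes x: "x \<in> carrier_vec N" and y: "y \<in> carrier_vec N"
  shows "(L c *\<^sub>v x) \<bullet> y = x \<bullet> (L c *\<^sub>v y)"
  using L_sym[OF x y] comm_scalar_prod[OF x Lv_carrier[OF y]] by simp

lemma PP_dot: assumes "a < k" "b < k" "x \<in> carrier_vec N" "w \<in> carrier_vec N"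
  shows "(P b *\<^sub>v (P a *\<^sub>v x)) \<bullet> w + (P a *\<^sub>v (P b *\<^sub>v x)) \<bullet> w
     = (if a = b then 2 * (x \<bullet> w) else 0)"
  using assms P_anti_dot[of b a x w] by auto

lemma L_sq: assumes x: "x \<in> carrier_vec N" and w: "w \<in> carrier_vec N"
  shows "(L c *\<^sub>v (L c *\<^sub>v x)) \<bullet> w = nsq c * (x \<bullet> w)"
proof -
  define T where "T a b = c a * c b * ((P b *\<^sub>v (P a *\<^sub>v x)) \<bullet> w)" for a b
  have "(L c *\<^sub>v (L c *\<^sub>v x)) \<bullet> w = (\<Sum>b<k. c b * ((P b *\<^sub>v (L c *\<^sub>v x)) \<bullet> w))"
    using L_dot[OF Lv_carrier[OF x] w] .
  also have "\<dots> = (\<Sum>b<k. c b * ((L c *\<^sub>v x) \<bullet> (P b *\<^sub>v w)))"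
    using P_sym x w by (intro sum.cong) auto
  also have "\<dots> = (\<Sum>b<k. c b * (\<Sum>a<k. c a * ((P a *\<^sub>v x) \<bullet> (P b *\<^sub>v w))))"
    using L_dot x w by (intro sum.cong) auto
  also have "\<dots> = (\<Sum>b<k. \<Sum>a<k. T a b)"
    unfolding T_def using P_sym x w by (auto simp: sum_distrib_left intro!: sum.cong)
  finally have e1: "(L c *\<^sub>v (L c *\<^sub>v x)) \<bullet> w = (\<Sum>b<k. \<Sum>a<k. T a b)" .
  have "2 * (\<Sum>b<k. \<Sum>a<k. T a b) = (\<Sum>b<k. \<Sum>a<k. T a b) + (\<Sum>a<k. \<Sum>b<k. T a b)"
    by (simp add: sum.swap[of T])
  also have "\<dots> = (\<Sum>b<k. \<Sum>a<k. T a b + T b a)"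
    by (simp add: sum.distrib sum.swap[of T])
  also have "\<dots> = (\<Sum>b<k. \<Sum>a<k. if a = b then 2 * (c a * c a * (x \<bullet> w)) else 0)"
  proof (intro sum.cong refl)
    fix a b assume "b \<in> {..<k}" "a \<in> {..<k}"
    hence "T a b + T b a = c a * c b * ((P b *\<^sub>v (P a *\<^sub>v x)) \<bullet> w + (P a *\<^sub>v (P b *\<^sub>v x)) \<bullet> w)"
      unfolding T_def by (simp add: algebra_simps)
    also have "\<dots> = (if a = b then 2 * (c a * c a * (x \<bullet> w)) else 0)"
      using PP_dot \<open>b \<in> {..<k}\<close> \<open>a \<in> {..<k}\<close> x w by auto
    finally show "T a b + T b a = (if a = b then 2 * (c a * c a * (x \<bullet> w)) else 0)" .
  qed
  also have "\<dots> = 2 * (nsq c * (x \<bullet> w))"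
    unfolding nsq_def by (simp add: sum_distrib_left sum_distrib_right)
  finally show ?thesis using e1 by simp
qed


lemma L_inv: assumes "nsq c = 1" "x \<in> carrier_vec N" shows "L c *\<^sub>v (L c *\<^sub>v x) = x"
  using assms by (intro vec_eq_by_dot[of _ N]) (auto simp: L_sq)

lemma L_norm: assumes "nsq c = 1" "x \<in> carrier_vec N" shows "(L c *\<^sub>v x) \<bullet> (L c *\<^sub>v x) = x \<bullet> x"
  using L_sym'[of "L c *\<^sub>v x" x c] L_inv[OF assms] assms(2) by simp

lemma L_q: assumes "x \<in> carrier_vec N" shows "(L c *\<^sub>v x) \<bullet> x = (\<Sum>i<k. c i * q i x)"
  unfolding q_def using L_dot[OF assms assms] .

lemma L_cong: assumes "\<And>i. i < k \<Longrightarrow> c i = d i" shows "L c = L d"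
  unfolding lin_comb_def using assms by (intro eq_matI) auto

lemma N_pos: "N > 0" using lpos by simp

lemma L_indep: assumes "L c = L d" "i < k" shows "c i = d i"
proof -
  define e where "e j = c j - d j" for j
  define w :: "real vec" where "w = unit_vec N 0"
  have w: "w \<in> carrier_vec N" "w \<bullet> w = 1" unfolding w_def using N_pos by auto
  have z: "(L e *\<^sub>v y) \<bullet> z = 0" if "y \<in> carrier_vec N" "z \<in> carrier_vec N" for y z
  proof -
    have "(L e *\<^sub>v y) \<bullet> z = (\<Sum>i<k. c i * ((P i *\<^sub>v y) \<bullet> z)) - (\<Sum>i<k. d i * ((P i *\<^sub>v y) \<bullet> z))"
      unfolding L_dot[OF that] e_def by (simp add: algebra_simps sum_subtractf)
    also have "\<dots> = 0" using L_dot[OF that, of c] L_dot[OF that, of d] assms(1) by simp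
    finally show ?thesis .
  qed
  have "nsq e = 0" using L_sq[OF w(1) w(1), of e] z[OF Lv_carrier[OF w(1)] w(1)] w(2) by simp
  hence "\<forall>j\<in>{..<k}. e j * e j = 0" unfolding nsq_def by (subst (asm) sum_nonneg_eq_0_iff) auto
  thus ?thesis using assms(2) unfolding e_def by auto
qed

lemma bessel: assumes x: "x \<in> unit_sphere N" shows "nsq (\<lambda>i. q i x) \<le> 1"
proof -
  let ?c = "\<lambda>i. q i x"
  have xc: "x \<in> carrier_vec N" "x \<bullet> x = 1" using x unfolding unit_sphere_def by auto
  have "0 \<le> (x - L ?c *\<^sub>v x) \<bullet> (x - L ?c *\<^sub>v x)" by (rule sp_self_ge0)
  also have "\<dots> = x \<bullet> x - 2 * (x \<bullet> (L ?c *\<^sub>v x)) + (L ?c *\<^sub>v x) \<bullet> (L ?c *\<^sub>v x)"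
    using xc by (intro dot_minus_self) auto
  also have "x \<bullet> (L ?c *\<^sub>v x) = nsq ?c"
    using L_q[OF xc(1), of ?c] comm_scalar_prod[OF xc(1) Lv_carrier[OF xc(1)]] unfolding nsq_def by simp
  also have "(L ?c *\<^sub>v x) \<bullet> (L ?c *\<^sub>v x) = nsq ?c"
    using L_sym'[OF Lv_carrier[OF xc(1)] xc(1), of ?c] L_sq[OF xc(1) xc(1), of ?c] xc by simp
  finally show ?thesis using xc by simp
qed

lemma L_le1: assumes a: "nsq a = 1" and x: "x \<in> unit_sphere N"
  shows "(L a *\<^sub>v x) \<bullet> x \<le> 1" and "(L a *\<^sub>v x) \<bullet> x = 1 \<Longrightarrow> L a *\<^sub>v x = x"
proof -
  have xc: "x \<in> carrier_vec N" "x \<bullet> x = 1" using x unfolding unit_sphere_def by auto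
  have e: "(L a *\<^sub>v x - x) \<bullet> (L a *\<^sub>v x - x) = 2 - 2 * ((L a *\<^sub>v x) \<bullet> x)"
    using dot_minus_self[OF Lv_carrier[OF xc(1)] xc(1), of a] L_norm[OF a xc(1)] xc by simp
  show "(L a *\<^sub>v x) \<bullet> x \<le> 1" using e sp_self_ge0[of "L a *\<^sub>v x - x"] by simp
  assume "(L a *\<^sub>v x) \<bullet> x = 1"
  hence "L a *\<^sub>v x - x = 0\<^sub>v N" using e sp_self_eq0[of "L a *\<^sub>v x - x" N] xc by simp
  thus "L a *\<^sub>v x = x" using xc minus_zero_eq[OF Lv_carrier[OF xc(1)] xc(1)] by blast
qed


definition fib :: "real vec \<Rightarrow> real vec set" where
  "fib x = {y \<in> unit_sphere N. \<forall>i<k. q i y = q i x}"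

definition Fx :: "(nat \<Rightarrow> real) \<Rightarrow> real vec set" where
  "Fx a = {y \<in> unit_sphere N. L a *\<^sub>v y = y}"

lemma pi_eq: "pi_C l Ps y = pi_C l Ps x \<longleftrightarrow> (\<forall>i<k. q i y = q i x)"
proof -
  have pz: "pi_C l Ps z = L (\<lambda>i. q i z)" for z unfolding pi_C_def q_def by simp
  show ?thesis unfolding pz
  proof
    assume "L (\<lambda>i. q i y) = L (\<lambda>i. q i x)"
    thus "\<forall>i<k. q i y = q i x" using L_indep by blast
  next
    assume "\<forall>i<k. q i y = q i x"
    thus "L (\<lambda>i. q i y) = L (\<lambda>i. q i x)" by (intro L_cong) blast
  qed
qed

lemma leaves_eq: "leaves l Ps = fib ` unit_sphere N"
  unfolding leaves_def fib_def pi_eq image_def by blast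

lemma focal_iff: assumes a: "nsq a = 1" and y: "y \<in> unit_sphere N"
  shows "(\<forall>i<k. q i y = a i) \<longleftrightarrow> L a *\<^sub>v y = y"
proof
  have yc: "y \<in> carrier_vec N" "y \<bullet> y = 1" using y unfolding unit_sphere_def by auto
  assume h: "\<forall>i<k. q i y = a i"
  have "(L a *\<^sub>v y) \<bullet> y = 1" using L_q[OF yc(1), of a] h a unfolding nsq_def by simp
  thus "L a *\<^sub>v y = y" using L_le1(2)[OF a y] by simp
next
  have yc: "y \<in> carrier_vec N" "y \<bullet> y = 1" using y unfolding unit_sphere_def by auto
  assume "L a *\<^sub>v y = y"
  hence s1: "(\<Sum>i<k. a i * q i y) = 1" using L_q[OF yc(1), of a] yc by simp
  have b: "(\<Sum>i<k. q i y * q i y) \<le> 1" using bessel[OF y] unfolding nsq_def by simp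
  have "(\<Sum>i<k. (q i y - a i) * (q i y - a i)) = (\<Sum>i<k. q i y * q i y) - 2 * (\<Sum>i<k. a i * q i y) + (\<Sum>i<k. a i * a i)"
    by (simp add: algebra_simps sum.distrib sum_subtractf sum_distrib_left)
  also have "\<dots> \<le> 0" using s1 b a unfolding nsq_def by simp
  finally have "(\<Sum>i<k. (q i y - a i) * (q i y - a i)) = 0"
    using sum_nonneg[of "{..<k}" "\<lambda>i. (q i y - a i) * (q i y - a i)"] by simp
  hence "\<forall>i\<in>{..<k}. (q i y - a i) * (q i y - a i) = 0" by (subst (asm) sum_nonneg_eq_0_iff) auto
  thus "\<forall>i<k. q i y = a i" by auto
qed

lemma anti_L: assumes i: "i < k" and z: "z \<in> carrier_vec N" and w: "w \<in> carrier_vec N"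
  shows "(L a *\<^sub>v (P i *\<^sub>v z)) \<bullet> w + (P i *\<^sub>v (L a *\<^sub>v z)) \<bullet> w = 2 * a i * (z \<bullet> w)"
proof -
  have e1: "(L a *\<^sub>v (P i *\<^sub>v z)) \<bullet> w = (\<Sum>b<k. a b * ((P b *\<^sub>v (P i *\<^sub>v z)) \<bullet> w))"
    using L_dot[OF Pv_carrier[OF i z] w] .
  have "(P i *\<^sub>v (L a *\<^sub>v z)) \<bullet> w = (L a *\<^sub>v z) \<bullet> (P i *\<^sub>v w)"
    using P_sym[OF i Lv_carrier[OF z] w] .
  also have "\<dots> = (\<Sum>b<k. a b * ((P b *\<^sub>v z) \<bullet> (P i *\<^sub>v w)))"
    using L_dot[OF z Pv_carrier[OF i w]] .
  also have "\<dots> = (\<Sum>b<k. a b * ((P i *\<^sub>v (P b *\<^sub>v z)) \<bullet> w))"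
    using P_sym[OF i _ w] z by (intro sum.cong) auto
  finally have "(L a *\<^sub>v (P i *\<^sub>v z)) \<bullet> w + (P i *\<^sub>v (L a *\<^sub>v z)) \<bullet> w
     = (\<Sum>b<k. a b * ((P b *\<^sub>v (P i *\<^sub>v z)) \<bullet> w + (P i *\<^sub>v (P b *\<^sub>v z)) \<bullet> w))"
    using e1 by (simp add: algebra_simps sum.distrib)
  also have "\<dots> = (\<Sum>b<k. if b = i then 2 * a i * (z \<bullet> w) else 0)"
    using PP_dot[OF i _ z w] by (intro sum.cong) auto
  also have "\<dots> = 2 * a i * (z \<bullet> w)" using i by simp
  finally show ?thesis .
qed

lemma q_L: assumes a: "nsq a = 1" and i: "i < k" and y: "y \<in> carrier_vec N"
  shows "q i (L a *\<^sub>v y) = 2 * a i * ((L a *\<^sub>v y) \<bullet> y) - q i y"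
proof -
  have Ly: "L a *\<^sub>v y \<in> carrier_vec N" using y by simp
  have "q i (L a *\<^sub>v y) = (L a *\<^sub>v (P i *\<^sub>v (L a *\<^sub>v y))) \<bullet> y"
    unfolding q_def using L_sym'[OF Pv_carrier[OF i Ly] y, of a] by simp
  also have "\<dots> = 2 * a i * ((L a *\<^sub>v y) \<bullet> y) - (P i *\<^sub>v (L a *\<^sub>v (L a *\<^sub>v y))) \<bullet> y"
    using anti_L[OF i Ly y, of a] by simp
  also have "(P i *\<^sub>v (L a *\<^sub>v (L a *\<^sub>v y))) \<bullet> y = q i y"
    unfolding q_def using L_inv[OF a y] by simp
  finally show ?thesis .
qed

lemma q_P: assumes i: "i < k" and j: "j < k" and y: "y \<in> carrier_vec N"
  shows "q i (P j *\<^sub>v y) = (if i = j then q i y else - q i y)"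
proof (cases "i = j")
  case True
  thus ?thesis unfolding q_def using comm_scalar_prod[OF y Pv_carrier[OF j y]] j y by simp
next
  case False
  have "q i (P j *\<^sub>v y) = - ((P j *\<^sub>v (P i *\<^sub>v y)) \<bullet> (P j *\<^sub>v y))"
    unfolding q_def using P_anti_dot[OF i j False y Pv_carrier[OF j y]] .
  also have "(P j *\<^sub>v (P i *\<^sub>v y)) \<bullet> (P j *\<^sub>v y) = (P i *\<^sub>v y) \<bullet> y"
    using P_sym[OF j Pv_carrier[OF i y] Pv_carrier[OF j y]] j y by simp
  finally show ?thesis using False unfolding q_def by simp
qed


lemma L_add_fix: assumes a: "nsq a = 1" and y: "y \<in> carrier_vec N"
  shows "L a *\<^sub>v (y + L a *\<^sub>v y) = y + L a *\<^sub>v y"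
proof -
  have "L a *\<^sub>v (y + L a *\<^sub>v y) = L a *\<^sub>v y + L a *\<^sub>v (L a *\<^sub>v y)"
    using mult_add_distrib_mat_vec[OF L_carrier y Lv_carrier[OF y]] .
  also have "\<dots> = L a *\<^sub>v y + y" using L_inv[OF a y] by simp
  also have "\<dots> = y + L a *\<^sub>v y" using comm_add_vec[OF Lv_carrier[OF y] y] .
  finally show ?thesis .
qed

lemma sum_flip: "(\<Sum>i<k. a i * (if i = j then c i else - c i)) = 2 * (a j * c j) - (\<Sum>i<k. a i * c i)"
  if "j < k" for a c :: "nat \<Rightarrow> real"
proof -
  have "(\<Sum>i<k. a i * (if i = j then c i else - c i)) = (\<Sum>i<k. (if i = j then 2 * (a i * c i) else 0) - a i * c i)"
    by (intro sum.cong) auto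
  also have "\<dots> = 2 * (a j * c j) - (\<Sum>i<k. a i * c i)"
    using that by (simp add: sum_subtractf)
  finally show ?thesis .
qed

lemma exists_fix: assumes a: "nsq a = 1" shows "\<exists>x\<in>unit_sphere N. L a *\<^sub>v x = x"
proof (rule ccontr)
  assume nf: "\<not> ?thesis"
  have neg: "(\<Sum>i<k. a i * q i y) = -1" if y: "y \<in> unit_sphere N" for y
  proof -
    have yc: "y \<in> carrier_vec N" "y \<bullet> y = 1" using y unfolding unit_sphere_def by auto
    let ?u = "y + L a *\<^sub>v y"
    have uc: "?u \<in> carrier_vec N" using yc by simp
    have "?u = 0\<^sub>v N"
    proof (rule ccontr)
      assume "?u \<noteq> 0\<^sub>v N"
      hence "nrm ?u \<in> unit_sphere N" "L a *\<^sub>v nrm ?u = nrm ?u"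
        using nrm_sphere[OF uc] nrm_fix[OF L_carrier uc L_add_fix[OF a yc(1)]] by auto
      thus False using nf by blast
    qed
    hence "0 = ?u \<bullet> y" using yc by simp
    also have "\<dots> = y \<bullet> y + (L a *\<^sub>v y) \<bullet> y" using add_scalar_prod_distrib[OF yc(1) Lv_carrier[OF yc(1)] yc(1)] .
    finally show ?thesis using L_q[OF yc(1), of a] yc by simp
  qed
  define y0 :: "real vec" where "y0 = unit_vec N 0"
  have y0: "y0 \<in> unit_sphere N" "y0 \<in> carrier_vec N" unfolding y0_def unit_sphere_def using N_pos by auto
  have each: "a j * q j y0 = -1" if j: "j < k" for j
  proof -
    have "(P j *\<^sub>v y0) \<bullet> (P j *\<^sub>v y0) = y0 \<bullet> y0"
      using P_sym[OF j y0(2) Pv_carrier[OF j y0(2)]] j y0 by simp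
    hence "P j *\<^sub>v y0 \<in> unit_sphere N" using y0 j unfolding unit_sphere_def by simp
    hence "-1 = (\<Sum>i<k. a i * q i (P j *\<^sub>v y0))" using neg by simp
    also have "\<dots> = (\<Sum>i<k. a i * (if i = j then q i y0 else - q i y0))"
      using q_P[OF _ j y0(2)] by (intro sum.cong) auto
    also have "\<dots> = 2 * (a j * q j y0) - (\<Sum>i<k. a i * q i y0)" using sum_flip[OF j] .
    finally show ?thesis using neg[OF y0(1)] by simp
  qed
  have "(\<Sum>j<k. a j * q j y0) = (\<Sum>j<k. -1::real)" using each by simp
  hence "-1 = - real k" using neg[OF y0(1)] by simp
  thus False using k2 by simp
qed

lemma fib_Fx: assumes a: "nsq a = 1" and x: "x \<in> unit_sphere N" and fx: "L a *\<^sub>v x = x"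
  shows "fib x = Fx a"
proof -
  have qx: "\<forall>i<k. q i x = a i" using focal_iff[OF a x] fx by simp
  show ?thesis unfolding fib_def Fx_def using focal_iff[OF a] qx by auto
qed

lemma focal_leaf: assumes a: "nsq a = 1"
  shows "Fx a \<in> leaves l Ps" "great N (Fx a)"
proof -
  obtain x where x: "x \<in> unit_sphere N" "L a *\<^sub>v x = x" using exists_fix[OF a] by blast
  show "Fx a \<in> leaves l Ps" unfolding leaves_eq using fib_Fx[OF a x] x by blast
  show "great N (Fx a)" unfolding great_def
  proof (intro ballI impI)
    fix y z assume yz: "y \<in> Fx a" "z \<in> Fx a" "y + z \<noteq> 0\<^sub>v N"
    have c: "y \<in> carrier_vec N" "z \<in> carrier_vec N" using yz unfolding Fx_def unit_sphere_def by auto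
    have "L a *\<^sub>v (y + z) = y + z"
      using mult_add_distrib_mat_vec[OF L_carrier c] yz unfolding Fx_def by simp
    thus "nrm (y + z) \<in> Fx a" unfolding Fx_def
      using nrm_sphere[OF _ yz(3)] nrm_fix[OF L_carrier _ ] c by auto
  qed
qed


lemma choose_dir: assumes nb: "nsq b < 1"
  shows "\<exists>a \<beta>. nsq a = 1 \<and> (\<forall>i<k. b i = \<beta> * a i) \<and> 0 \<le> \<beta> \<and> \<beta> < 1"
proof -
  have ge: "nsq b \<ge> 0" unfolding nsq_def by (intro sum_nonneg) auto
  show ?thesis
  proof (cases "nsq b = 0")
    case True
    hence "\<forall>i\<in>{..<k}. b i * b i = 0" unfolding nsq_def by (subst (asm) sum_nonneg_eq_0_iff) auto
    hence b0: "\<forall>i<k. b i = 0" by auto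
    define a :: "nat \<Rightarrow> real" where "a i = (if i = 0 then 1 else 0)" for i
    have "nsq a = 1" unfolding nsq_def a_def using k2 by (auto simp: if_distrib cong: if_cong)
    thus ?thesis using b0 by (intro exI[of _ a] exI[of _ 0]) auto
  next
    case False
    hence pos: "nsq b > 0" using ge by simp
    define s where "s = sqrt (nsq b)"
    have s: "s > 0" "s < 1" "s * s = nsq b" unfolding s_def using pos nb by (auto simp: real_sqrt_lt_1_iff)
    define a where "a i = b i / s" for i
    have "nsq a = nsq b / (s * s)" unfolding nsq_def a_def by (simp add: sum_divide_distrib)
    hence "nsq a = 1" using s pos by simp
    moreover have "\<forall>i<k. b i = s * a i" unfolding a_def using s by simp
    ultimately show ?thesis using s by (intro exI[of _ a] exI[of _ s]) auto
  qed
qed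

lemma great_leaf_focal: assumes x: "x \<in> unit_sphere N" and g: "great N (fib x)"
  shows "\<exists>a. nsq a = 1 \<and> fib x = Fx a"
proof -
  let ?b = "\<lambda>i. q i x"
  have xc: "x \<in> carrier_vec N" "x \<bullet> x = 1" using x unfolding unit_sphere_def by auto
  have nb: "nsq ?b \<le> 1" using bessel[OF x] .
  show ?thesis
  proof (cases "nsq ?b = 1")
    case True
    have "L ?b *\<^sub>v x = x" using focal_iff[OF True x] by simp
    thus ?thesis using fib_Fx[OF True x] True by blast
  next
    case False
    then obtain a \<beta> where a: "nsq a = 1" and ab: "\<forall>i<k. ?b i = \<beta> * a i"
      and bt: "0 \<le> \<beta>" "\<beta> < 1" using choose_dir[of ?b] nb by auto
    have beta: "(L a *\<^sub>v y) \<bullet> y = \<beta>" if y: "y \<in> fib x" for y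
    proof -
      have yc: "y \<in> carrier_vec N" using y unfolding fib_def unit_sphere_def by auto
      have "(L a *\<^sub>v y) \<bullet> y = (\<Sum>i<k. a i * q i y)" using L_q[OF yc] .
      also have "\<dots> = (\<Sum>i<k. \<beta> * (a i * a i))" using y ab unfolding fib_def by (intro sum.cong) auto
      also have "\<dots> = \<beta>" using a unfolding nsq_def by (simp add: sum_distrib_left[symmetric])
      finally show ?thesis .
    qed
    have mem: "L a *\<^sub>v y \<in> fib x" if y: "y \<in> fib x" for y
    proof -
      have yc: "y \<in> carrier_vec N" "y \<bullet> y = 1" using y unfolding fib_def unit_sphere_def by auto
      have "L a *\<^sub>v y \<in> unit_sphere N" unfolding unit_sphere_def using L_norm[OF a yc(1)] yc by simp
      moreover have "q i (L a *\<^sub>v y) = q i x" if i: "i < k" for i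
      proof -
        have "q i (L a *\<^sub>v y) = 2 * a i * \<beta> - q i y" using q_L[OF a i yc(1)] beta[OF y] by simp
        also have "\<dots> = q i x" using y i ab unfolding fib_def by auto
        finally show ?thesis .
      qed
      ultimately show ?thesis unfolding fib_def by auto
    qed
    have xf: "x \<in> fib x" unfolding fib_def using x by auto
    let ?u = "x + L a *\<^sub>v x"
    have uc: "?u \<in> carrier_vec N" using xc by simp
    have "?u \<noteq> 0\<^sub>v N"
    proof
      assume "?u = 0\<^sub>v N"
      hence "0 = ?u \<bullet> x" using xc by simp
      also have "\<dots> = x \<bullet> x + (L a *\<^sub>v x) \<bullet> x" using add_scalar_prod_distrib[OF xc(1) Lv_carrier[OF xc(1)] xc(1)] .
      finally show False using beta[OF xf] xc bt by simp
    qed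
    hence nu: "nrm ?u \<in> fib x" using g xf mem[OF xf] unfolding great_def by blast
    have "L a *\<^sub>v nrm ?u = nrm ?u" using nrm_fix[OF L_carrier uc L_add_fix[OF a xc(1)]] .
    moreover have "nrm ?u \<bullet> nrm ?u = 1" using nu unfolding fib_def unit_sphere_def by auto
    ultimately have "\<beta> = 1" using beta[OF nu] by simp
    thus ?thesis using bt by simp
  qed
qed


lemma leaves_sub: "Lf \<in> leaves l Ps \<Longrightarrow> Lf \<subseteq> unit_sphere N"
  unfolding leaves_eq fib_def by auto

lemma decomp: "\<exists>r c'. nsq c' = 1 \<and> (\<forall>i<k. c i = r * c' i)"
proof (cases "nsq c < 1")
  case True thus ?thesis using choose_dir[OF True] by blast
next
  case False
  define s where "s = sqrt (nsq c)"
  have s: "s > 0" "s * s = nsq c" unfolding s_def using False by auto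
  define a where "a i = c i / s" for i
  have "nsq a = nsq c / (s * s)" unfolding nsq_def a_def by (simp add: sum_divide_distrib)
  moreover have "nsq c > 0" using s by (metis mult_pos_pos)
  ultimately have "nsq a = 1" using s by simp
  moreover have "\<forall>i<k. c i = s * a i" unfolding a_def using s by simp
  ultimately show ?thesis by blast
qed

lemma L_scale: "L (\<lambda>i. r * c i) = r \<cdot>\<^sub>m L c"
  unfolding lin_comb_def by (intro eq_matI) (auto simp: sum_distrib_left mult.assoc)

end

lemma det_inv:
  fixes P P' :: "real mat"
  assumes Pc: "P \<in> carrier_mat n n" and P'c: "P' \<in> carrier_mat n n"
  and Ps: "\<And>x y. x \<in> carrier_vec n \<Longrightarrow> y \<in> carrier_vec n \<Longrightarrow> (P *\<^sub>v x) \<bullet> y = x \<bullet> (P *\<^sub>v y)"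
  and P's: "\<And>x y. x \<in> carrier_vec n \<Longrightarrow> y \<in> carrier_vec n \<Longrightarrow> (P' *\<^sub>v x) \<bullet> y = x \<bullet> (P' *\<^sub>v y)"
  and P'i: "\<And>x. x \<in> carrier_vec n \<Longrightarrow> P' *\<^sub>v (P' *\<^sub>v x) = x"
  and Pi: "\<And>x. x \<in> carrier_vec n \<Longrightarrow> P *\<^sub>v (P *\<^sub>v x) = x"
  and eq: "{y \<in> unit_sphere n. P *\<^sub>v y = y} = {y \<in> unit_sphere n. P' *\<^sub>v y = y}"
  shows "P = P'"
proof -
  have fixE: "P' *\<^sub>v z = z \<and> P *\<^sub>v z = z" if z: "z \<in> carrier_vec n" and fz: "P *\<^sub>v z = z \<or> P' *\<^sub>v z = z" for z
  proof (cases "z = 0\<^sub>v n")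
    case True
    thus ?thesis using Pc P'c by auto
  next
    case False
    define c where "c = 1 / sqrt (z \<bullet> z)"
    have "z \<bullet> z \<noteq> 0" using sp_self_eq0[OF z] False by auto
    hence c0: "c \<noteq> 0" unfolding c_def by simp
    have nz: "nrm z = c \<cdot>\<^sub>v z" unfolding nrm_def c_def by simp
    have S: "nrm z \<in> unit_sphere n" using nrm_sphere[OF z False] .
    have fix_both: "P *\<^sub>v nrm z = nrm z \<and> P' *\<^sub>v nrm z = nrm z"
      using fz nrm_fix[OF Pc z] nrm_fix[OF P'c z] eq S by blast
    have cancel: "A *\<^sub>v z = z" if A: "A \<in> carrier_mat n n" "A *\<^sub>v nrm z = nrm z" for A
    proof -
      have "c \<cdot>\<^sub>v (A *\<^sub>v z) = c \<cdot>\<^sub>v z" using A mult_mat_vec[OF A(1) z] nz by simp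
      hence "(1/c) \<cdot>\<^sub>v (c \<cdot>\<^sub>v (A *\<^sub>v z)) = (1/c) \<cdot>\<^sub>v (c \<cdot>\<^sub>v z)" by simp
      thus ?thesis using c0 by (simp add: smult_smult_assoc)
    qed
    show ?thesis using cancel[OF Pc] cancel[OF P'c] fix_both by blast
  qed
  show ?thesis
  proof (rule mat_eq_by_vec[OF Pc P'c])
    fix x :: "real vec" assume x: "x \<in> carrier_vec n"
    have Px: "P *\<^sub>v x \<in> carrier_vec n" using Pc x by simp
    let ?u = "x + P *\<^sub>v x" and ?w = "x - P *\<^sub>v x"
    have uc: "?u \<in> carrier_vec n" and wc: "?w \<in> carrier_vec n" using x Px by auto
    have "P *\<^sub>v ?u = P *\<^sub>v x + x" using mult_add_distrib_mat_vec[OF Pc x Px] Pi[OF x] by simp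
    hence "P *\<^sub>v ?u = ?u" using comm_add_vec[OF Px x] by simp
    hence P'u: "P' *\<^sub>v ?u = ?u" using fixE[OF uc] by blast
    have Pw: "P *\<^sub>v ?w = P *\<^sub>v x - x" using mult_minus_distrib_mat_vec[OF Pc x Px] Pi[OF x] by simp
    have P'wc: "P' *\<^sub>v ?w \<in> carrier_vec n" using P'c wc by simp
    let ?v = "?w + P' *\<^sub>v ?w"
    have vc: "?v \<in> carrier_vec n" using wc P'wc by simp
    have "P' *\<^sub>v ?v = P' *\<^sub>v ?w + ?w" using mult_add_distrib_mat_vec[OF P'c wc P'wc] P'i[OF wc] by simp
    hence "P' *\<^sub>v ?v = ?v" using comm_add_vec[OF P'wc wc] by simp
    hence Pv: "P *\<^sub>v ?v = ?v" using fixE[OF vc] by blast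
    have "?v \<bullet> ?w = (P *\<^sub>v ?v) \<bullet> ?w" using Pv by simp
    also have "\<dots> = ?v \<bullet> (P *\<^sub>v ?w)" using Ps[OF vc wc] .
    also have "\<dots> = ?v \<bullet> (P *\<^sub>v x) - ?v \<bullet> x" using Pw scalar_prod_minus_distrib[OF vc Px x] by simp
    also have "\<dots> = - (?v \<bullet> ?w)" using scalar_prod_minus_distrib[OF vc x Px] by simp
    finally have vw: "?v \<bullet> ?w = 0" by simp
    have "?v \<bullet> ?w = ?w \<bullet> ?w + (P' *\<^sub>v ?w) \<bullet> ?w" using add_scalar_prod_distrib[OF wc P'wc wc] .
    moreover have "(P' *\<^sub>v ?w) \<bullet> (P' *\<^sub>v ?w) = ?w \<bullet> ?w"
      using P's[OF wc P'wc] P'i[OF wc] by simp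
    ultimately have "?v \<bullet> ?v = 0" using dot_add_self[OF wc P'wc] vw comm_scalar_prod[OF wc P'wc] by simp
    hence v0: "?v = 0\<^sub>v n" using sp_self_eq0[OF vc] by simp
    show "P *\<^sub>v x = P' *\<^sub>v x"
    proof (rule eq_vecI)
      fix i assume i: "i < dim_vec (P' *\<^sub>v x)"
      hence i': "i < n" using P'c by simp
      have dd: "dim_vec x = n" "dim_vec (P *\<^sub>v x) = n" using x Pc by auto
      have e1: "(P' *\<^sub>v x) $ i + (P' *\<^sub>v (P *\<^sub>v x)) $ i = x $ i + (P *\<^sub>v x) $ i"
        using arg_cong[OF P'u, of "\<lambda>v. v $ i"] mult_add_distrib_mat_vec[OF P'c x Px] i' dd P'c by simp
      have e2: "(P' *\<^sub>v x) $ i - (P' *\<^sub>v (P *\<^sub>v x)) $ i = - (x $ i - (P *\<^sub>v x) $ i)"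
        using arg_cong[OF v0, of "\<lambda>v. v $ i"] mult_minus_distrib_mat_vec[OF P'c x Px] i' dd P'c by simp
      show "(P *\<^sub>v x) $ i = (P' *\<^sub>v x) $ i" using e1 e2 by simp
    qed (use Pc P'c in simp)
  qed
qed


lemma mat_zero_vec: assumes "(A::real mat) \<in> carrier_mat m n" shows "A *\<^sub>v 0\<^sub>v n = 0\<^sub>v m"
  using assms by (intro eq_vecI) (auto simp: scalar_prod_def)

lemma orth_TB: assumes Bc: "(B::real mat) \<in> carrier_mat n n" and BTB: "transpose_mat B * B = 1\<^sub>m n"
  and y: "y \<in> carrier_vec n" shows "transpose_mat B *\<^sub>v (B *\<^sub>v y) = y"
proof -
  have "transpose_mat B *\<^sub>v (B *\<^sub>v y) = (transpose_mat B * B) *\<^sub>v y"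
    using Bc y by (subst assoc_mult_mat_vec) auto
  thus ?thesis using BTB y by simp
qed

lemma orth_dot: assumes Bc: "(B::real mat) \<in> carrier_mat n n" and BTB: "transpose_mat B * B = 1\<^sub>m n"
  and x: "x \<in> carrier_vec n" and y: "y \<in> carrier_vec n" shows "(B *\<^sub>v x) \<bullet> (B *\<^sub>v y) = x \<bullet> y"
proof -
  have "(transpose_mat B *\<^sub>v (B *\<^sub>v y)) \<bullet> x = (B *\<^sub>v y) \<bullet> (B *\<^sub>v x)"
    using transpose_vec_mult_scalar[OF Bc x, of "B *\<^sub>v y"] Bc y by simp
  thus ?thesis using orth_TB[OF Bc BTB y] comm_scalar_prod[OF x y]
    comm_scalar_prod[of "B *\<^sub>v x" n "B *\<^sub>v y"] Bc x y by simp
qed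

lemma orth_sphere: assumes Bc: "(B::real mat) \<in> carrier_mat n n" and BTB: "transpose_mat B * B = 1\<^sub>m n"
  and x: "x \<in> unit_sphere n" shows "B *\<^sub>v x \<in> unit_sphere n"
  using orth_dot[OF Bc BTB, of x x] x Bc unfolding unit_sphere_def by auto

lemma orth_nrm: assumes Bc: "(B::real mat) \<in> carrier_mat n n" and BTB: "transpose_mat B * B = 1\<^sub>m n"
  and x: "x \<in> carrier_vec n" shows "nrm (B *\<^sub>v x) = B *\<^sub>v nrm x"
  unfolding nrm_def using orth_dot[OF Bc BTB x x] mult_mat_vec[OF Bc x] by simp

lemma main:
  assumes A: "cs l Ps" and C: "cs l Qs" and Bc: "B \<in> carrier_mat (2*l) (2*l)"
    and BTB: "transpose_mat B * B = 1\<^sub>m (2*l)" and BBT: "B * transpose_mat B = 1\<^sub>m (2*l)"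
    and lv: "leaves l Qs = (\<lambda>Lf. (\<lambda>x. B *\<^sub>v x) ` Lf) ` leaves l Ps"
    and c: "cs.nsq Qs c = 1"
  shows "\<exists>a. cs.nsq Ps a = 1 \<and> lin_comb (2*l) Qs c = B * lin_comb (2*l) Ps a * transpose_mat B"
proof -
  interpret A: cs l Ps by fact
  interpret C: cs l Qs by fact
  let ?n = "2*l"
  have BTc: "transpose_mat B \<in> carrier_mat ?n ?n" using Bc by simp
  have BTT: "transpose_mat (transpose_mat B) * transpose_mat B = 1\<^sub>m ?n" using BBT by simp
  have "C.Fx c \<in> leaves l Qs" using C.focal_leaf(1)[OF c] .
  then obtain Lf where Lf: "Lf \<in> leaves l Ps" and eqL: "C.Fx c = (\<lambda>x. B *\<^sub>v x) ` Lf"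
    using lv by (metis (no_types, lifting) imageE)
  have LfS: "Lf \<subseteq> unit_sphere ?n" using A.leaves_sub[OF Lf] .
  have LfC: "Lf \<subseteq> carrier_vec ?n" using LfS unfolding unit_sphere_def by auto
  have inj: "y \<in> Lf" if h1: "B *\<^sub>v y \<in> (\<lambda>x. B *\<^sub>v x) ` Lf" and h2: "y \<in> carrier_vec ?n" for y
  proof -
    obtain x where x: "x \<in> Lf" "B *\<^sub>v y = B *\<^sub>v x" using h1 unfolding image_def by blast
    have "y = x" using orth_TB[OF Bc BTB h2] orth_TB[OF Bc BTB, of x] x LfC by auto
    thus ?thesis using x by simp
  qed
  have gL: "great ?n Lf" unfolding great_def
  proof (intro ballI impI)
    fix y z assume yz: "y \<in> Lf" "z \<in> Lf" "y + z \<noteq> 0\<^sub>v ?n"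
    have c2: "y \<in> carrier_vec ?n" "z \<in> carrier_vec ?n" using yz LfC by auto
    have "B *\<^sub>v (y + z) \<noteq> 0\<^sub>v ?n"
    proof
      assume "B *\<^sub>v (y + z) = 0\<^sub>v ?n"
      hence "transpose_mat B *\<^sub>v (B *\<^sub>v (y + z)) = 0\<^sub>v ?n" using mat_zero_vec[OF BTc] by simp
      thus False using orth_TB[OF Bc BTB, of "y+z"] c2 yz(3) by simp
    qed
    hence ne: "B *\<^sub>v y + B *\<^sub>v z \<noteq> 0\<^sub>v ?n" using mult_add_distrib_mat_vec[OF Bc c2] by simp
    have "B *\<^sub>v y \<in> C.Fx c" "B *\<^sub>v z \<in> C.Fx c" unfolding eqL using yz(1,2) by blast+
    hence "nrm (B *\<^sub>v y + B *\<^sub>v z) \<in> C.Fx c" using C.focal_leaf(2)[OF c] ne unfolding great_def by blast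
    moreover have "nrm (B *\<^sub>v y + B *\<^sub>v z) = B *\<^sub>v nrm (y + z)"
      using orth_nrm[OF Bc BTB, of "y + z"] mult_add_distrib_mat_vec[OF Bc c2] c2 by simp
    ultimately have "B *\<^sub>v nrm (y + z) \<in> (\<lambda>x. B *\<^sub>v x) ` Lf" using eqL by simp
    moreover have "nrm (y + z) \<in> carrier_vec ?n" using c2 unfolding nrm_def by simp
    ultimately show "nrm (y + z) \<in> Lf" by (rule inj)
  qed
  obtain x where x: "x \<in> unit_sphere ?n" and Lfx: "Lf = A.fib x" using Lf unfolding A.leaves_eq by blast
  obtain a where a: "A.nsq a = 1" and Lfa: "Lf = A.Fx a" using A.great_leaf_focal[OF x] gL Lfx by auto
  let ?M = "B * lin_comb ?n Ps a * transpose_mat B"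
  have Mc: "?M \<in> carrier_mat ?n ?n" by (rule mult_carrier_mat[OF mult_carrier_mat[OF Bc A.L_carrier] BTc])
  have Mv: "?M *\<^sub>v y = B *\<^sub>v (A.L a *\<^sub>v (transpose_mat B *\<^sub>v y))" if "y \<in> carrier_vec ?n" for y
    using that Bc by (simp add: assoc_mult_mat_vec[of _ ?n ?n _ ?n])
  have BBTv: "B *\<^sub>v (transpose_mat B *\<^sub>v y) = y" if "y \<in> carrier_vec ?n" for y
    using orth_TB[OF BTc BTT that] by simp
  have setM: "C.Fx c = {y \<in> unit_sphere ?n. ?M *\<^sub>v y = y}"
  proof (intro equalityI subsetI)
    fix y assume "y \<in> C.Fx c"
    hence "y \<in> (\<lambda>x. B *\<^sub>v x) ` A.Fx a" using eqL Lfa by simp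
    then obtain x where x: "x \<in> A.Fx a" "y = B *\<^sub>v x" unfolding image_def by blast
    have xc: "x \<in> unit_sphere ?n" "x \<in> carrier_vec ?n" using x unfolding A.Fx_def unit_sphere_def by auto
    have "?M *\<^sub>v y = y" using Mv[of y] x xc orth_TB[OF Bc BTB xc(2)] Bc unfolding A.Fx_def by simp
    thus "y \<in> {y \<in> unit_sphere ?n. ?M *\<^sub>v y = y}" using orth_sphere[OF Bc BTB xc(1)] x by simp
  next
    fix y assume "y \<in> {y \<in> unit_sphere ?n. ?M *\<^sub>v y = y}"
    hence y: "y \<in> unit_sphere ?n" "?M *\<^sub>v y = y" by auto
    have yc: "y \<in> carrier_vec ?n" using y unfolding unit_sphere_def by auto
    let ?x = "transpose_mat B *\<^sub>v y"
    have xS: "?x \<in> unit_sphere ?n" using orth_sphere[OF BTc BTT y(1)] .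
    have "A.L a *\<^sub>v ?x = transpose_mat B *\<^sub>v (?M *\<^sub>v y)"
      using Mv[OF yc] orth_TB[OF Bc BTB, of "A.L a *\<^sub>v ?x"] yc BTc by simp
    hence "A.L a *\<^sub>v ?x = ?x" using y by simp
    hence "?x \<in> Lf" using xS Lfa unfolding A.Fx_def by simp
    hence "B *\<^sub>v ?x \<in> C.Fx c" unfolding eqL by blast
    thus "y \<in> C.Fx c" using BBTv[OF yc] by simp
  qed
  have "C.L c = ?M"
  proof (rule det_inv[OF C.L_carrier Mc])
    show "\<And>x y. x \<in> carrier_vec ?n \<Longrightarrow> y \<in> carrier_vec ?n \<Longrightarrow> (C.L c *\<^sub>v x) \<bullet> y = x \<bullet> (C.L c *\<^sub>v y)"
      using C.L_sym' by blast
    show "\<And>x y. x \<in> carrier_vec ?n \<Longrightarrow> y \<in> carrier_vec ?n \<Longrightarrow> (?M *\<^sub>v x) \<bullet> y = x \<bullet> (?M *\<^sub>v y)"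
    proof -
      fix x y :: "real vec" assume xy: "x \<in> carrier_vec ?n" "y \<in> carrier_vec ?n"
      have bx: "transpose_mat B *\<^sub>v x \<in> carrier_vec ?n" "transpose_mat B *\<^sub>v y \<in> carrier_vec ?n" using xy BTc by auto
      have "(?M *\<^sub>v x) \<bullet> y = (B *\<^sub>v (A.L a *\<^sub>v (transpose_mat B *\<^sub>v x))) \<bullet> (B *\<^sub>v (transpose_mat B *\<^sub>v y))"
        using Mv[OF xy(1)] BBTv[OF xy(2)] by simp
      also have "\<dots> = (A.L a *\<^sub>v (transpose_mat B *\<^sub>v x)) \<bullet> (transpose_mat B *\<^sub>v y)"
        using orth_dot[OF Bc BTB] bx by simp
      also have "\<dots> = (transpose_mat B *\<^sub>v x) \<bullet> (A.L a *\<^sub>v (transpose_mat B *\<^sub>v y))"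
        using A.L_sym' bx by simp
      also have "\<dots> = (B *\<^sub>v (transpose_mat B *\<^sub>v x)) \<bullet> (B *\<^sub>v (A.L a *\<^sub>v (transpose_mat B *\<^sub>v y)))"
        using orth_dot[OF Bc BTB] bx by simp
      also have "\<dots> = x \<bullet> (?M *\<^sub>v y)" using Mv[OF xy(2)] BBTv[OF xy(1)] by simp
      finally show "(?M *\<^sub>v x) \<bullet> y = x \<bullet> (?M *\<^sub>v y)" .
    qed
    show "\<And>x. x \<in> carrier_vec ?n \<Longrightarrow> ?M *\<^sub>v (?M *\<^sub>v x) = x"
    proof -
      fix x :: "real vec" assume x: "x \<in> carrier_vec ?n"
      have bx: "transpose_mat B *\<^sub>v x \<in> carrier_vec ?n" using x BTc by auto
      have "?M *\<^sub>v (?M *\<^sub>v x) = B *\<^sub>v (A.L a *\<^sub>v (A.L a *\<^sub>v (transpose_mat B *\<^sub>v x)))"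
        using Mv[OF x] Mv[OF mult_mat_vec_carrier[OF Bc A.Lv_carrier[OF bx]]] Mc x orth_TB[OF Bc BTB, of "A.L a *\<^sub>v (transpose_mat B *\<^sub>v x)"] bx by simp
      also have "\<dots> = x" using A.L_inv[OF a bx] BBTv[OF x] by simp
      finally show "?M *\<^sub>v (?M *\<^sub>v x) = x" .
    qed
    show "\<And>x. x \<in> carrier_vec ?n \<Longrightarrow> C.L c *\<^sub>v (C.L c *\<^sub>v x) = x"
      using C.L_inv[OF c] by blast
    show "{y \<in> unit_sphere ?n. C.L c *\<^sub>v y = y} = {y \<in> unit_sphere ?n. ?M *\<^sub>v y = y}"
      using setM unfolding C.Fx_def .
  qed
  thus ?thesis using a by blast
qed


lemma orthonormal_count:
  fixes vs :: "nat \<Rightarrow> real vec"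
  assumes vc: "\<And>i. i < N \<Longrightarrow> vs i \<in> carrier_vec M"
  and on: "\<And>i j. i < N \<Longrightarrow> j < N \<Longrightarrow> vs i \<bullet> vs j = (if i = j then 1 else 0)"
  shows "N \<le> M"
proof (rule ccontr)
  assume "\<not> N \<le> M"
  hence MN: "M < N" by simp
  define T :: "real mat" where "T = mat N N (\<lambda>(r, c). if r < M then vs c $ r else 0)"
  have Tc: "T \<in> carrier_mat N N" unfolding T_def by simp
  have "transpose_mat T * T = 1\<^sub>m N"
  proof (rule eq_matI)
    fix i j assume ij: "i < dim_row (1\<^sub>m N :: real mat)" "j < dim_col (1\<^sub>m N :: real mat)"
    hence ij': "i < N" "j < N" by auto
    have "(transpose_mat T * T) $$ (i, j) = (\<Sum>r<N. (if r < M then vs i $ r else 0) * (if r < M then vs j $ r else 0))"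
      using ij' unfolding T_def by (simp add: scalar_prod_def atLeast0LessThan)
    also have "\<dots> = (\<Sum>r\<in>{..<N}. if r \<in> {..<M} then vs i $ r * vs j $ r else 0)"
      by (intro sum.cong) auto
    also have "\<dots> = (\<Sum>r\<in>{..<N} \<inter> {..<M}. vs i $ r * vs j $ r)"
      by (simp add: sum.inter_restrict)
    also have "{..<N} \<inter> {..<M} = {0..<M}" using MN by auto
    also have "(\<Sum>r\<in>{0..<M}. vs i $ r * vs j $ r) = vs i \<bullet> vs j"
      using vc[OF ij'(2)] unfolding scalar_prod_def by simp
    also have "\<dots> = 1\<^sub>m N $$ (i, j)" using on[OF ij'] ij' by simp
    finally show "(transpose_mat T * T) $$ (i, j) = 1\<^sub>m N $$ (i, j)" .
  qed (use Tc in auto)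
  hence "T * transpose_mat T = 1\<^sub>m N" using mat_mult_left_right_inverse[of "transpose_mat T" N T] Tc by simp
  hence "(T * transpose_mat T) $$ (N - 1, N - 1) = 1" using MN by simp
  moreover have "(T * transpose_mat T) $$ (N - 1, N - 1) = 0"
  proof -
    have h: "\<not> N - Suc 0 < M" using MN by linarith
    show ?thesis using MN h unfolding T_def by (simp add: scalar_prod_def)
  qed
  ultimately show False by simp
qed

lemma iso_dot: assumes f: "sphere_isometry n n' f" and x: "x \<in> unit_sphere n" and y: "y \<in> unit_sphere n"
  shows "f x \<bullet> f y = x \<bullet> y"
proof -
  have fx: "f x \<in> unit_sphere n'" "f y \<in> unit_sphere n'" using f x y unfolding sphere_isometry_def bij_betw_def by auto
  have "vdist (f x) (f y) = vdist x y" using f x y unfolding sphere_isometry_def by auto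
  hence "(f x - f y) \<bullet> (f x - f y) = (x - y) \<bullet> (x - y)" unfolding vdist_def by simp
  moreover have "(f x - f y) \<bullet> (f x - f y) = 2 - 2 * (f x \<bullet> f y)"
    using dot_minus_self[of "f x" n' "f y"] fx unfolding unit_sphere_def by auto
  moreover have "(x - y) \<bullet> (x - y) = 2 - 2 * (x \<bullet> y)"
    using dot_minus_self[of x n y] x y unfolding unit_sphere_def by auto
  ultimately show ?thesis by simp
qed

lemma iso_dim: assumes f: "sphere_isometry n n' f" shows "n \<le> n'"
proof (rule orthonormal_count[of n "\<lambda>i. f (unit_vec n i)" n'])
  have u: "unit_vec n i \<in> unit_sphere n" if "i < n" for i
    using that unfolding unit_sphere_def by simp
  show "\<And>i. i < n \<Longrightarrow> f (unit_vec n i) \<in> carrier_vec n'"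
    using f u unfolding sphere_isometry_def bij_betw_def unit_sphere_def by auto
  show "\<And>i j. i < n \<Longrightarrow> j < n \<Longrightarrow> f (unit_vec n i) \<bullet> f (unit_vec n j) = (if i = j then 1 else 0)"
    using iso_dot[OF f u u] by simp
qed

lemma iso_inv: assumes f: "sphere_isometry n n' f" shows "sphere_isometry n' n (inv_into (unit_sphere n) f)"
proof -
  have b: "bij_betw f (unit_sphere n) (unit_sphere n')" using f unfolding sphere_isometry_def by simp
  have bi: "bij_betw (inv_into (unit_sphere n) f) (unit_sphere n') (unit_sphere n)" using bij_betw_inv_into[OF b] .
  show ?thesis unfolding sphere_isometry_def
  proof (intro conjI bi ballI)
    fix x y assume xy: "x \<in> unit_sphere n'" "y \<in> unit_sphere n'"
    let ?g = "inv_into (unit_sphere n) f"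
    have g: "?g x \<in> unit_sphere n" "?g y \<in> unit_sphere n" using bi xy unfolding bij_betw_def by auto
    have "f (?g x) = x" "f (?g y) = y" using xy b by (auto simp: bij_betw_def f_inv_into_f)
    thus "vdist (?g x) (?g y) = vdist x y" using f g unfolding sphere_isometry_def by metis
  qed
qed

lemma iso_lin: assumes f: "sphere_isometry n n' f"
  shows "n = n' \<and> (\<exists>B. B \<in> carrier_mat n n \<and> transpose_mat B * B = 1\<^sub>m n \<and> B * transpose_mat B = 1\<^sub>m n
           \<and> (\<forall>x\<in>unit_sphere n. f x = B *\<^sub>v x))"
proof -
  have nn: "n = n'" using iso_dim[OF f] iso_dim[OF iso_inv[OF f]] by simp
  have u: "unit_vec n i \<in> unit_sphere n" if "i < n" for i
    using that unfolding unit_sphere_def by simp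
  have fS: "f x \<in> unit_sphere n" if "x \<in> unit_sphere n" for x
    using f that nn unfolding sphere_isometry_def bij_betw_def by auto
  have fc: "f x \<in> carrier_vec n" if "x \<in> unit_sphere n" for x
    using fS[OF that] unfolding unit_sphere_def by auto
  define B :: "real mat" where "B = mat n n (\<lambda>(i, j). f (unit_vec n j) $ i)"
  have Bc: "B \<in> carrier_mat n n" unfolding B_def by simp
  have colB: "col B j = f (unit_vec n j)" if "j < n" for j
    unfolding B_def using fc[OF u[OF that]] that by (intro eq_vecI) auto
  have BTB: "transpose_mat B * B = 1\<^sub>m n"
  proof (rule eq_matI)
    fix i j assume "i < dim_row (1\<^sub>m n :: real mat)" "j < dim_col (1\<^sub>m n :: real mat)"
    hence ij: "i < n" "j < n" by auto
    have "(transpose_mat B * B) $$ (i, j) = f (unit_vec n i) \<bullet> f (unit_vec n j)"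
      using ij Bc colB by simp
    also have "\<dots> = unit_vec n i \<bullet> unit_vec n j" using iso_dot[OF f u[OF ij(1)] u[OF ij(2)]] .
    finally show "(transpose_mat B * B) $$ (i, j) = 1\<^sub>m n $$ (i, j)" using ij by simp
  qed (use Bc in auto)
  have BBT: "B * transpose_mat B = 1\<^sub>m n"
    using mat_mult_left_right_inverse[OF _ Bc BTB] Bc by simp
  have fx: "f x = B *\<^sub>v x" if x: "x \<in> unit_sphere n" for x
  proof -
    have xc: "x \<in> carrier_vec n" using x unfolding unit_sphere_def by auto
    have "transpose_mat B *\<^sub>v f x = x"
    proof (rule eq_vecI)
      fix i assume "i < dim_vec x"
      hence i: "i < n" using xc by simp
      have "(transpose_mat B *\<^sub>v f x) $ i = f (unit_vec n i) \<bullet> f x" using i Bc colB by simp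
      also have "\<dots> = unit_vec n i \<bullet> x" using iso_dot[OF f u[OF i] x] .
      finally show "(transpose_mat B *\<^sub>v f x) $ i = x $ i" using i xc by simp
    qed (use Bc xc in simp)
    hence "B *\<^sub>v (transpose_mat B *\<^sub>v f x) = B *\<^sub>v x" by simp
    moreover have "B *\<^sub>v (transpose_mat B *\<^sub>v f x) = f x"
      using orth_TB[of "transpose_mat B" n "f x"] Bc BBT fc[OF x] by simp
    ultimately show ?thesis by simp
  qed
  show ?thesis using nn Bc BTB BBT fx by blast
qed


lemma smult_conj: assumes Bc: "(B::real mat) \<in> carrier_mat n n" and X: "X \<in> carrier_mat n n"
  shows "r \<cdot>\<^sub>m (B * X * transpose_mat B) = B * (r \<cdot>\<^sub>m X) * transpose_mat B"
proof -
  have "B * (r \<cdot>\<^sub>m X) = r \<cdot>\<^sub>m (B * X)" using mult_smult_distrib[OF Bc X] .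
  moreover have "(r \<cdot>\<^sub>m (B * X)) * transpose_mat B = r \<cdot>\<^sub>m (B * X * transpose_mat B)"
    using mult_smult_assoc_mat[of "B * X" n n "transpose_mat B" n] Bc X by simp
  ultimately show ?thesis by simp
qed

theorem proposition4p2:
  fixes l l' :: nat and Ps Qs :: "real mat list"
  assumes "clifford_system l Ps" and "clifford_system l' Qs"
    and "l > cs_m Ps + 1 \<or> (l = cs_m Ps \<and> cs_m Ps \<ge> 2)"
    and "l' > cs_m Qs + 1 \<or> (l' = cs_m Qs \<and> cs_m Qs \<ge> 2)"
    and "\<not> geom_equiv l Ps l' Qs"
  shows "\<not> (\<exists>f. sphere_isometry (2*l) (2*l') f \<and>
               (\<lambda>L. f ` L) ` leaves l Ps = leaves l' Qs)"
proof
  assume "\<exists>f. sphere_isometry (2*l) (2*l') f \<and> (\<lambda>L. f ` L) ` leaves l Ps = leaves l' Qs"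
  then obtain f where f: "sphere_isometry (2*l) (2*l') f" and fl: "(\<lambda>L. f ` L) ` leaves l Ps = leaves l' Qs"
    by blast
  obtain B where ll: "2*l = 2*l'" and Bc: "B \<in> carrier_mat (2*l) (2*l)"
    and BTB: "transpose_mat B * B = 1\<^sub>m (2*l)" and BBT: "B * transpose_mat B = 1\<^sub>m (2*l)"
    and fB: "\<forall>x\<in>unit_sphere (2*l). f x = B *\<^sub>v x"
    using iso_lin[OF f] by blast
  have l'l: "l' = l" using ll by simp
  have A: "cs l Ps" unfolding cs_def using assms(1,3) by auto
  have C: "cs l Qs" unfolding cs_def using assms(2,4) l'l by auto
  interpret A: cs l Ps by fact
  interpret C: cs l Qs by fact
  let ?n = "2*l"
  have BTc: "transpose_mat B \<in> carrier_mat ?n ?n" using Bc by simp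
  have BTT: "transpose_mat (transpose_mat B) * transpose_mat B = 1\<^sub>m ?n" using BBT by simp
  have BTT2: "transpose_mat B * transpose_mat (transpose_mat B) = 1\<^sub>m ?n" using BTB by simp
  have lv: "leaves l Qs = (\<lambda>Lf. (\<lambda>x. B *\<^sub>v x) ` Lf) ` leaves l Ps"
  proof -
    have "(\<lambda>L. f ` L) ` leaves l Ps = (\<lambda>Lf. (\<lambda>x. B *\<^sub>v x) ` Lf) ` leaves l Ps"
    proof (rule image_cong[OF refl])
      fix Lf assume "Lf \<in> leaves l Ps"
      hence "Lf \<subseteq> unit_sphere ?n" using A.leaves_sub by blast
      thus "f ` Lf = (\<lambda>x. B *\<^sub>v x) ` Lf" using fB by (intro image_cong) auto
    qed
    thus ?thesis using fl l'l by simp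
  qed
  have lv': "leaves l Ps = (\<lambda>Lf. (\<lambda>x. transpose_mat B *\<^sub>v x) ` Lf) ` leaves l Qs"
  proof -
    have "(\<lambda>Lf. (\<lambda>x. transpose_mat B *\<^sub>v x) ` Lf) ` leaves l Qs
        = (\<lambda>Lf. (\<lambda>x. transpose_mat B *\<^sub>v x) ` ((\<lambda>x. B *\<^sub>v x) ` Lf)) ` leaves l Ps"
      unfolding lv image_image ..
    also have "\<dots> = (\<lambda>Lf. Lf) ` leaves l Ps"
    proof (rule image_cong[OF refl])
      fix Lf assume "Lf \<in> leaves l Ps"
      hence "Lf \<subseteq> carrier_vec ?n" using A.leaves_sub unfolding unit_sphere_def by blast
      hence "(\<lambda>x. transpose_mat B *\<^sub>v x) ` ((\<lambda>x. B *\<^sub>v x) ` Lf) = (\<lambda>x. x) ` Lf"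
        unfolding image_image using orth_TB[OF Bc BTB] by (intro image_cong) auto
      thus "(\<lambda>x. transpose_mat B *\<^sub>v x) ` ((\<lambda>x. B *\<^sub>v x) ` Lf) = Lf" by simp
    qed
    finally show ?thesis by simp
  qed
  have fwd: "\<exists>a. A.nsq a = 1 \<and> lin_comb ?n Qs c = B * lin_comb ?n Ps a * transpose_mat B"
    if "C.nsq c = 1" for c using main[OF A C Bc BTB BBT lv that] .
  have bwd: "\<exists>c. C.nsq c = 1 \<and> lin_comb ?n Ps a = transpose_mat B * lin_comb ?n Qs c * B"
    if "A.nsq a = 1" for a using main[OF C A BTc BTT BTT2 lv' that] by simp
  have "mat_span ?n Qs = (\<lambda>P. B * P * transpose_mat B) ` mat_span ?n Ps"
  proof (intro equalityI subsetI)
    fix X assume "X \<in> mat_span ?n Qs"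
    then obtain c where X: "X = C.L c" unfolding mat_span_def by auto
    obtain r c' where c': "C.nsq c' = 1" "\<forall>i<length Qs. c i = r * c' i" using C.decomp by blast
    obtain a where a: "A.nsq a = 1" "C.L c' = B * A.L a * transpose_mat B" using fwd[OF c'(1)] by blast
    have "X = C.L (\<lambda>i. r * c' i)" unfolding X using c'(2) by (intro C.L_cong) auto
    also have "\<dots> = r \<cdot>\<^sub>m (B * A.L a * transpose_mat B)" unfolding C.L_scale a(2) ..
    also have "\<dots> = B * A.L (\<lambda>i. r * a i) * transpose_mat B"
      unfolding A.L_scale using smult_conj[OF Bc A.L_carrier] .
    finally show "X \<in> (\<lambda>P. B * P * transpose_mat B) ` mat_span ?n Ps" unfolding mat_span_def by blast
  next
    fix Y assume "Y \<in> (\<lambda>P. B * P * transpose_mat B) ` mat_span ?n Ps"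
    then obtain a where Y: "Y = B * A.L a * transpose_mat B" unfolding mat_span_def by auto
    obtain r a' where a': "A.nsq a' = 1" "\<forall>i<length Ps. a i = r * a' i" using A.decomp by blast
    obtain c where c: "C.nsq c = 1" "A.L a' = transpose_mat B * C.L c * B" using bwd[OF a'(1)] by blast
    have BLB: "B * A.L a' * transpose_mat B = C.L c"
    proof (rule mat_eq_by_vec[OF _ C.L_carrier])
      show "B * A.L a' * transpose_mat B \<in> carrier_mat ?n ?n"
        by (rule mult_carrier_mat[OF mult_carrier_mat[OF Bc A.L_carrier] BTc])
      fix x :: "real vec" assume x: "x \<in> carrier_vec ?n"
      have bb: "B *\<^sub>v (transpose_mat B *\<^sub>v y) = y" if "y \<in> carrier_vec ?n" for y
        using orth_TB[OF BTc BTT that] by simp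
      have c1: "transpose_mat B *\<^sub>v x \<in> carrier_vec ?n" using BTc x by simp
      have c2: "B *\<^sub>v (transpose_mat B *\<^sub>v x) \<in> carrier_vec ?n" using Bc c1 by simp
      have c3: "C.L c *\<^sub>v (B *\<^sub>v (transpose_mat B *\<^sub>v x)) \<in> carrier_vec ?n" using c2 by simp
      have "(B * A.L a' * transpose_mat B) *\<^sub>v x = B *\<^sub>v (A.L a' *\<^sub>v (transpose_mat B *\<^sub>v x))"
        using Bc BTc x by (simp add: assoc_mult_mat_vec[of _ ?n ?n _ ?n])
      also have "A.L a' *\<^sub>v (transpose_mat B *\<^sub>v x) = transpose_mat B *\<^sub>v (C.L c *\<^sub>v (B *\<^sub>v (transpose_mat B *\<^sub>v x)))"
        unfolding c(2) using Bc BTc c1 by (simp add: assoc_mult_mat_vec[of _ ?n ?n _ ?n])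
      finally show "(B * A.L a' * transpose_mat B) *\<^sub>v x = C.L c *\<^sub>v x"
        using bb[OF c3] bb[OF x] by simp
    qed
    have "Y = B * A.L (\<lambda>i. r * a' i) * transpose_mat B" unfolding Y using a'(2) by (subst A.L_cong) auto
    also have "\<dots> = r \<cdot>\<^sub>m (B * A.L a' * transpose_mat B)"
      unfolding A.L_scale using smult_conj[OF Bc A.L_carrier] by simp
    also have "\<dots> = C.L (\<lambda>i. r * c i)" unfolding BLB C.L_scale ..
    finally show "Y \<in> mat_span ?n Qs" unfolding mat_span_def by blast
  qed
  moreover have "orth_mat ?n (transpose_mat B)" unfolding orth_mat_def using BTc BBT by simp
  ultimately have "geom_equiv l Ps l' Qs" unfolding geom_equiv_def l'l
    by (intro conjI refl exI[of _ "transpose_mat B"]) simp_all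
  thus False using assms(5) by simp
qed

end
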